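(* Let $\lambda,\mu$ be partitions, $n$ a positive integer, and let $M$ be a multiline queue of shape $\mu$ on $n$ columns whose $j$-th column contains exactly $\lambda'_j$ balls for each $j$. Then $\rho_N(M)=M(\lambda')$ if and only if the row word $\mathrm{rw}(M)$ is a lattice word.
   Context: For a partition $\nu$ with conjugate $\nu'$, a multiline queue of shape $\nu$ on $n$ columns is a tuple $(B_1,\dots,B_{\nu_1})$ of subsets of $[n]$ with $|B_j|=\nu'_j$, drawn with rows bottom to top, columns $1..n$ left to right, ball in $(r,j)$ iff $j\in B_r$; tuples with empty top rows are identified with the tuple obtained by deleting those rows. $M(\nu)=(M_1,\dots,M_{\nu_1})$ with $M_j=\{1,\dots,\nu'_j\}$ is the left-justified multiline queue of shape $\nu$. The row word $\mathrm{rw}(M)$ scans rows bottom to top, each row left to right, recording column numbers of balls; the column word $\mathrm{cw}(M)$ scans columns left to right, each top to bottom, recording row numbers. A word is a lattice word if every initial segment contains at least as many letters $i$ as letters $i+1$ for every $i\ge1$. Collapsing: $\mathrm{Par}_i(w)$ writes "(" for each letter $i+1$ and ")" for each letter $i$ of $w$, left to right, and iteratively matches a "(" with a ")" to its right when adjacent or separated only by matched parentheses. $e_i^\star(B)$ moves every ball of row $i+1$ whose letter in $\mathrm{cw}(B)$ is unmatched in $\mathrm{Par}_i(\mathrm{cw}(B))$ down to row $i$ in the same column. With $L$ the number of rows, $e^\star_{[a,b]}=e^\star_ae^\star_{a+1}\cdots e^\star_b$ (acting right to left) and $\rho_N(B)=e^\star_{[1,L-1]}\cdots e^\star_{[1,1]}(B)$.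 *)

theory Defs
  imports Main
begin

definition is_partition :: "nat list \<Rightarrow> bool" where
  "is_partition \<nu> \<longleftrightarrow> sorted_wrt (\<ge>) \<nu> \<and> 0 \<notin> set \<nu>"

definition part :: "nat list \<Rightarrow> nat \<Rightarrow> nat" where
  "part \<nu> i = (if 1 \<le> i \<and> i \<le> length \<nu> then \<nu> ! (i - 1) else 0)"

text \<open>Conjugate partition, 1-indexed: conjugate nu j = number of parts \<ge> j (meaningful for j \<ge> 1).\<close>
definition conjugate :: "nat list \<Rightarrow> nat \<Rightarrow> nat" where
  "conjugate \<nu> j = length (filter (\<lambda>x. j \<le> x) \<nu>)"

definition conj_part :: "nat list \<Rightarrow> nat list" where
  "conj_part \<nu> = map (conjugate \<nu>) [1..<part \<nu> 1 + 1]"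

text \<open>A multiline queue is represented as a function from row indices to sets of columns;
  row 0 and all rows above the last one are empty (this realises the identification of
  tuples differing by empty top rows).\<close>
definition is_mlq :: "nat list \<Rightarrow> nat \<Rightarrow> (nat \<Rightarrow> nat set) \<Rightarrow> bool" where
  "is_mlq \<mu> n B \<longleftrightarrow> B 0 = {} \<and> (\<forall>r. B r \<subseteq> {1..n}) \<and> (\<forall>r\<ge>1. card (B r) = conjugate \<mu> r)"

definition left_justified :: "nat list \<Rightarrow> (nat \<Rightarrow> nat set)" where
  "left_justified \<nu> = (\<lambda>r. if r = 0 then {} else {1..conjugate \<nu> r})"

definition rw :: "nat \<Rightarrow> (nat \<Rightarrow> nat set) \<Rightarrow> nat list" where
  "rw L B = concat (map (\<lambda>r. sorted_list_of_set (B r)) [1..<L + 1])"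

definition cw_pos :: "nat \<Rightarrow> nat \<Rightarrow> (nat \<Rightarrow> nat set) \<Rightarrow> (nat \<times> nat) list" where
  "cw_pos n L B = concat (map (\<lambda>j. map (\<lambda>r. (r, j)) (filter (\<lambda>r. j \<in> B r) (rev [1..<L + 1])))
                               [1..<n + 1])"

definition cw :: "nat \<Rightarrow> nat \<Rightarrow> (nat \<Rightarrow> nat set) \<Rightarrow> nat list" where
  "cw n L B = map fst (cw_pos n L B)"

definition lattice_word :: "nat list \<Rightarrow> bool" where
  "lattice_word w \<longleftrightarrow>
     (\<forall>m \<le> length w. \<forall>i \<ge> 1. count_list (take m w) (Suc i) \<le> count_list (take m w) i)"

text \<open>matched i w p q: position p (a letter i+1, i.e. an opening parenthesis) is matched
  with position q (a letter i, closing parenthesis) to its right, all parenthesis letters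
  strictly between them being matched among themselves (iterative matching of adjacent
  pairs; letters other than i, i+1 are ignored). Positions are 0-based.\<close>
inductive matched :: "nat \<Rightarrow> nat list \<Rightarrow> nat \<Rightarrow> nat \<Rightarrow> bool" for i w where
  "\<lbrakk> p < q; q < length w; w ! p = Suc i; w ! q = i;
     \<forall>k. p < k \<and> k < q \<and> w ! k \<in> {i, Suc i} \<longrightarrow>
         (\<exists>a b. p < a \<and> b < q \<and> matched i w a b \<and> (k = a \<or> k = b)) \<rbrakk>
   \<Longrightarrow> matched i w p q"

definition unmatched_cols :: "nat \<Rightarrow> nat \<Rightarrow> nat \<Rightarrow> (nat \<Rightarrow> nat set) \<Rightarrow> nat set" where
  "unmatched_cols i n L B =
     {snd (cw_pos n L B ! p) | p. p < length (cw_pos n L B) \<and> fst (cw_pos n L B ! p) = Suc i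
        \<and> \<not> (\<exists>q. matched i (cw n L B) p q)}"

definition estar :: "nat \<Rightarrow> nat \<Rightarrow> nat \<Rightarrow> (nat \<Rightarrow> nat set) \<Rightarrow> (nat \<Rightarrow> nat set)" where
  "estar i n L B = (let U = unmatched_cols i n L B in
      B(i := B i \<union> U, Suc i := B (Suc i) - U))"

text \<open>e*_[a,b] = e*_a e*_(a+1) ... e*_b, acting right to left.\<close>
definition estar_int :: "nat \<Rightarrow> nat \<Rightarrow> nat \<Rightarrow> nat \<Rightarrow> (nat \<Rightarrow> nat set) \<Rightarrow> (nat \<Rightarrow> nat set)" where
  "estar_int n L a b B = foldr (\<lambda>i. estar i n L) [a..<b + 1] B"

definition rhoN :: "nat \<Rightarrow> nat \<Rightarrow> (nat \<Rightarrow> nat set) \<Rightarrow> (nat \<Rightarrow> nat set)" where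
  "rhoN n L B = fold (\<lambda>k. estar_int n L 1 k) [1..<L] B"

end

theory Submission
  imports Defs
begin


definition cwlt :: "nat \<times> nat \<Rightarrow> nat \<times> nat \<Rightarrow> bool" where
  "cwlt a b \<longleftrightarrow> snd a < snd b \<or> (snd a = snd b \<and> fst b < fst a)"

lemma sorted_wrt_concat_map:
  "sorted_wrt Q xs \<Longrightarrow> (\<forall>x\<in>set xs. sorted_wrt R (f x)) \<Longrightarrow>
   (\<forall>x y a b. Q x y \<longrightarrow> a \<in> set (f x) \<longrightarrow> b \<in> set (f y) \<longrightarrow> R a b) \<Longrightarrow>
   sorted_wrt R (concat (map f xs))"
  by (induction xs) (auto simp: sorted_wrt_append)

lemma cw_pos_set: "set (cw_pos n L B) = {(r,j). 1 \<le> j \<and> j \<le> n \<and> 1 \<le> r \<and> r \<le> L \<and> j \<in> B r}"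
  by (auto simp: cw_pos_def image_iff simp del: upt_Suc)

lemma cw_pos_sorted: "sorted_wrt cwlt (cw_pos n L B)"
  unfolding cw_pos_def
proof (rule sorted_wrt_concat_map[where Q="(<)"])
  show "sorted_wrt (<) [1..<n + 1]" by (rule sorted_wrt_upt)
  show "\<forall>x\<in>set [1..<n + 1]. sorted_wrt cwlt (map (\<lambda>r. (r, x)) (filter (\<lambda>r. x \<in> B r) (rev [1..<L + 1])))"
    by (auto simp: sorted_wrt_map sorted_wrt_rev cwlt_def intro!: sorted_wrt_filter)
  show "\<forall>x y a b. x < y \<longrightarrow> a \<in> set (map (\<lambda>r. (r, x)) (filter (\<lambda>r. x \<in> B r) (rev [1..<L + 1]))) \<longrightarrow>
        b \<in> set (map (\<lambda>r. (r, y)) (filter (\<lambda>r. y \<in> B r) (rev [1..<L + 1]))) \<longrightarrow> cwlt a b"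
    by (auto simp: cwlt_def)
qed

lemma cw_pos_less:
  assumes "p < length (cw_pos n L B)" "q < length (cw_pos n L B)" "p < q"
  shows "cwlt (cw_pos n L B ! p) (cw_pos n L B ! q)"
  using cw_pos_sorted[of n L B] assms by (auto simp: sorted_wrt_iff_nth_less)

lemma cw_pos_less_rev:
  assumes "p < length (cw_pos n L B)" "q < length (cw_pos n L B)"
    "cwlt (cw_pos n L B ! p) (cw_pos n L B ! q)"
  shows "p < q"
proof (rule ccontr)
  assume "\<not> p < q"
  then consider "p = q" | "q < p" by linarith
  then show False
  proof cases
    case 1 then show ?thesis using assms(3) by (auto simp: cwlt_def)
  next
    case 2 then show ?thesis using cw_pos_less[OF assms(2,1) 2] assms(3) by (auto simp: cwlt_def)
  qed
qed

lemma cw_pos_idx: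
  assumes "1 \<le> j" "j \<le> n" "1 \<le> r" "r \<le> L" "j \<in> B r"
  obtains p where "p < length (cw_pos n L B)" "cw_pos n L B ! p = (r, j)"
proof -
  have "(r, j) \<in> set (cw_pos n L B)" using assms by (simp add: cw_pos_set)
  then show ?thesis using that by (metis in_set_conv_nth)
qed

lemma cw_pos_nth_in:
  assumes "p < length (cw_pos n L B)"
  shows "1 \<le> snd (cw_pos n L B ! p) \<and> snd (cw_pos n L B ! p) \<le> n \<and> 1 \<le> fst (cw_pos n L B ! p)
     \<and> fst (cw_pos n L B ! p) \<le> L \<and> snd (cw_pos n L B ! p) \<in> B (fst (cw_pos n L B ! p))"
proof -
  have "cw_pos n L B ! p \<in> set (cw_pos n L B)" using assms by simp
  then show ?thesis by (auto simp: cw_pos_set split: prod.splits)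
qed

lemma cw_nth: "p < length (cw_pos n L B) \<Longrightarrow> cw n L B ! p = fst (cw_pos n L B ! p)"
  by (simp add: cw_def)

lemma length_cw: "length (cw n L B) = length (cw_pos n L B)"
  by (simp add: cw_def)



lemma matched_props: "matched i w p q \<Longrightarrow> p < q \<and> q < length w \<and> w ! p = Suc i \<and> w ! q = i"
  by (erule matched.cases) auto

lemma unmatched_sub:
  assumes "1 \<le> i"
  shows "unmatched_cols i n L B \<subseteq> B (Suc i) - B i"
proof
  fix j assume "j \<in> unmatched_cols i n L B"
  then obtain p where p: "p < length (cw_pos n L B)" "fst (cw_pos n L B ! p) = Suc i"
    "snd (cw_pos n L B ! p) = j" and nm: "\<not> (\<exists>q. matched i (cw n L B) p q)"
    by (auto simp: unmatched_cols_def)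
  have xp: "cw_pos n L B ! p = (Suc i, j)" using p by (metis prod.collapse)
  have jin: "1 \<le> j" "j \<le> n" "Suc i \<le> L" "j \<in> B (Suc i)" using cw_pos_nth_in[OF p(1)] p by auto
  show "j \<in> B (Suc i) - B i"
  proof (rule ccontr)
    assume "j \<notin> B (Suc i) - B i"
    then have "j \<in> B i" using jin by auto
    then obtain q where q: "q < length (cw_pos n L B)" "cw_pos n L B ! q = (i, j)"
      using cw_pos_idx[of j n i L B] jin assms by auto
    have pq: "p < q" using cw_pos_less_rev[OF p(1) q(1)] xp q by (simp add: cwlt_def)
    have "matched i (cw n L B) p q"
    proof (rule matched.intros)
      show "p < q" by fact
      show "q < length (cw n L B)" using q by (simp add: length_cw)
      show "cw n L B ! p = Suc i" using p by (simp add: cw_nth)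
      show "cw n L B ! q = i" using q by (simp add: cw_nth)
      show "\<forall>k. p < k \<and> k < q \<and> cw n L B ! k \<in> {i, Suc i} \<longrightarrow>
          (\<exists>a b. p < a \<and> b < q \<and> matched i (cw n L B) a b \<and> (k = a \<or> k = b))"
      proof (intro allI impI)
        fix k assume k: "p < k \<and> k < q \<and> cw n L B ! k \<in> {i, Suc i}"
        have kl: "k < length (cw_pos n L B)" using k q by auto
        have "cwlt (Suc i, j) (cw_pos n L B ! k)" using cw_pos_less[OF p(1) kl] k xp by auto
        moreover have "cwlt (cw_pos n L B ! k) (i, j)" using cw_pos_less[OF kl q(1)] k q by auto
        ultimately show "\<exists>a b. p < a \<and> b < q \<and> matched i (cw n L B) a b \<and> (k = a \<or> k = b)"
          by (auto simp: cwlt_def)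
      qed
    qed
    then show False using nm by blast
  qed
qed

lemma unmatched_in:
  assumes "1 \<le> i" "Suc i \<le> L" "1 \<le> j" "j \<le> n" "j \<in> B (Suc i)" "j \<notin> B i"
    and right: "\<forall>j'. j < j' \<longrightarrow> j' \<notin> B i"
  shows "j \<in> unmatched_cols i n L B"
proof -
  obtain p where p: "p < length (cw_pos n L B)" "cw_pos n L B ! p = (Suc i, j)"
    using cw_pos_idx[of j n "Suc i" L B] assms by auto
  have "\<not> matched i (cw n L B) p q" for q
  proof
    assume "matched i (cw n L B) p q"
    from matched_props[OF this] have pq: "p < q" "q < length (cw_pos n L B)" "fst (cw_pos n L B ! q) = i"
      by (auto simp: length_cw cw_nth)
    have "cwlt (Suc i, j) (cw_pos n L B ! q)" using cw_pos_less[OF p(1) pq(2,1)] p by simp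
    moreover have "snd (cw_pos n L B ! q) \<in> B i" using cw_pos_nth_in[OF pq(2)] pq by simp
    ultimately show False using assms right pq by (auto simp: cwlt_def)
  qed
  then show ?thesis unfolding unmatched_cols_def using p
    by (auto intro!: exI[of _ p])
qed

lemma unmatched_notin:
  assumes "1 \<le> i" "Suc i \<le> L" "1 \<le> c" "Suc c \<le> n" "c \<in> B (Suc i)" "c \<notin> B i"
    "Suc c \<in> B i" "Suc c \<notin> B (Suc i)"
  shows "c \<notin> unmatched_cols i n L B"
proof
  assume "c \<in> unmatched_cols i n L B"
  then obtain p where p: "p < length (cw_pos n L B)" "fst (cw_pos n L B ! p) = Suc i"
    "snd (cw_pos n L B ! p) = c" and nm: "\<not> (\<exists>q. matched i (cw n L B) p q)"
    by (auto simp: unmatched_cols_def)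
  have xp: "cw_pos n L B ! p = (Suc i, c)" using p by (metis prod.collapse)
  obtain q where q: "q < length (cw_pos n L B)" "cw_pos n L B ! q = (i, Suc c)"
    using cw_pos_idx[of "Suc c" n i L B] assms by auto
  have pq: "p < q" using cw_pos_less_rev[OF p(1) q(1)] xp q by (simp add: cwlt_def)
  have "matched i (cw n L B) p q"
  proof (rule matched.intros)
    show "p < q" by fact
    show "q < length (cw n L B)" using q by (simp add: length_cw)
    show "cw n L B ! p = Suc i" using p by (simp add: cw_nth)
    show "cw n L B ! q = i" using q by (simp add: cw_nth)
    show "\<forall>k. p < k \<and> k < q \<and> cw n L B ! k \<in> {i, Suc i} \<longrightarrow>
        (\<exists>a b. p < a \<and> b < q \<and> matched i (cw n L B) a b \<and> (k = a \<or> k = b))"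
    proof (intro allI impI)
      fix k assume k: "p < k \<and> k < q \<and> cw n L B ! k \<in> {i, Suc i}"
      have kl: "k < length (cw_pos n L B)" using k q by auto
      have "cwlt (Suc i, c) (cw_pos n L B ! k)" using cw_pos_less[OF p(1) kl] k xp by auto
      moreover have "cwlt (cw_pos n L B ! k) (i, Suc c)" using cw_pos_less[OF kl q(1)] k q by auto
      moreover have "snd (cw_pos n L B ! k) \<in> B (fst (cw_pos n L B ! k))" using cw_pos_nth_in[OF kl] by simp
      moreover have "fst (cw_pos n L B ! k) \<in> {i, Suc i}" using k kl by (simp add: cw_nth)
      ultimately show "\<exists>a b. p < a \<and> b < q \<and> matched i (cw n L B) a b \<and> (k = a \<or> k = b)"
        using assms by (auto simp: cwlt_def)
    qed
  qed
  then show False using nm by blast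
qed



fun Ncnt :: "(nat \<Rightarrow> nat set) \<Rightarrow> nat \<Rightarrow> nat \<Rightarrow> nat" where
  "Ncnt B c 0 = 0"
| "Ncnt B c (Suc s) = Ncnt B c s + (if c \<in> B (Suc s) then 1 else 0)"

definition lat :: "nat \<Rightarrow> (nat \<Rightarrow> nat set) \<Rightarrow> bool" where
  "lat L B \<longleftrightarrow> (\<forall>s\<le>L. \<forall>c\<ge>1. Ncnt B (Suc c) s \<le> Ncnt B c s)"

lemma rw_Suc: "rw (Suc L) B = rw L B @ sorted_list_of_set (B (Suc L))"
  by (simp add: rw_def)

lemma rw_0: "rw 0 B = []" by (simp add: rw_def)

lemma count_distinct: "distinct xs \<Longrightarrow> count_list xs x = (if x \<in> set xs then 1 else 0)"
  by (induction xs) auto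

lemma count_rw: "(\<forall>r. finite (B r)) \<Longrightarrow> count_list (rw L B) c = Ncnt B c L"
  by (induction L) (auto simp: rw_Suc rw_0 count_distinct)

lemma lw_append: "lattice_word ((xs::nat list) @ ys) \<longleftrightarrow> lattice_word xs \<and>
   (\<forall>m \<le> length ys. \<forall>i::nat. i \<ge> 1 \<longrightarrow> count_list (xs @ take m ys) (Suc i) \<le> count_list (xs @ take m ys) i)"
proof
  assume H: "lattice_word (xs @ ys)"
  have "lattice_word xs" unfolding lattice_word_def
  proof (intro allI impI)
    fix m i :: nat assume "m \<le> length xs" "1 \<le> i"
    moreover have "take m (xs @ ys) = take m xs" using \<open>m \<le> length xs\<close> by simp
    moreover have "m \<le> length (xs @ ys)" using \<open>m \<le> length xs\<close> by simp
    ultimately show "count_list (take m xs) (Suc i) \<le> count_list (take m xs) i"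
      using H unfolding lattice_word_def by metis
  qed
  moreover have "\<forall>m \<le> length ys. \<forall>i\<ge>1. count_list (xs @ take m ys) (Suc i) \<le> count_list (xs @ take m ys) i"
  proof (intro allI impI)
    fix m i :: nat assume "m \<le> length ys" "1 \<le> i"
    then have "count_list (take (length xs + m) (xs @ ys)) (Suc i) \<le> count_list (take (length xs + m) (xs @ ys)) i"
      using H unfolding lattice_word_def by (metis add_le_mono le_refl length_append)
    then show "count_list (xs @ take m ys) (Suc i) \<le> count_list (xs @ take m ys) i" by simp
  qed
  ultimately show "lattice_word xs \<and> (\<forall>m \<le> length ys. \<forall>i\<ge>1. count_list (xs @ take m ys) (Suc i) \<le> count_list (xs @ take m ys) i)" by blast
next
  assume H: "lattice_word xs \<and> (\<forall>m \<le> length ys. \<forall>i\<ge>1. count_list (xs @ take m ys) (Suc i) \<le> count_list (xs @ take m ys) i)"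
  show "lattice_word (xs @ ys)" unfolding lattice_word_def
  proof (intro allI impI)
    fix m i :: nat assume m: "m \<le> length (xs @ ys)" and i: "1 \<le> i"
    show "count_list (take m (xs @ ys)) (Suc i) \<le> count_list (take m (xs @ ys)) i"
    proof (cases "m \<le> length xs")
      case True
      then show ?thesis using H i unfolding lattice_word_def by simp
    next
      case False
      then have "take m (xs @ ys) = xs @ take (m - length xs) ys" by simp
      moreover have "m - length xs \<le> length ys" using m by simp
      ultimately show ?thesis using H i by metis
    qed
  qed
qed

lemma sorted_take_mem:
  assumes "sorted xs" "distinct xs" "b \<in> set (take m xs)" "a \<in> set xs" "a < b"
  shows "a \<in> set (take m xs)"
proof -
  obtain q where q: "q < length xs" "xs ! q = a" using assms(4) by (metis in_set_conv_nth)
  obtain q' where q': "q' < length (take m xs)" "take m xs ! q' = b" using assms(3) by (metis in_set_conv_nth)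
  have "q' < m" "q' < length xs" "xs ! q' = b" using q' by auto
  have "q < q'"
  proof (rule ccontr)
    assume "\<not> q < q'"
    then have "q' \<le> q" by simp
    then have "xs ! q' \<le> xs ! q" using assms(1) q by (metis sorted_nth_mono)
    then show False using q \<open>xs ! q' = b\<close> assms(5) by simp
  qed
  then show ?thesis using q \<open>q' < m\<close> by (metis in_set_conv_nth length_take min_less_iff_conj nth_take order.strict_trans)
qed

lemma lw_sorted:
  assumes "finite S"
  shows "lattice_word (xs @ sorted_list_of_set S) \<longleftrightarrow> lattice_word xs \<and>
    (\<forall>i\<ge>1. count_list xs (Suc i) + (if Suc i \<in> S then 1 else 0) \<le> count_list xs i + (if i \<in> S then 1 else 0))"
    (is "?L \<longleftrightarrow> ?R")
proof -
  let ?ys = "sorted_list_of_set S"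
  have ds: "distinct (take m ?ys)" for m by simp
  have ct: "count_list (take m ?ys) x = (if x \<in> set (take m ?ys) then 1 else 0)" for m x
    using count_distinct[OF ds] by simp
  have st: "sorted ?ys" "distinct ?ys" "set ?ys = S" using assms by auto
  show ?thesis
  proof
    assume L: ?L
    then have lx: "lattice_word xs" and H: "\<forall>m \<le> length ?ys. \<forall>i\<ge>1. count_list (xs @ take m ?ys) (Suc i) \<le> count_list (xs @ take m ?ys) i"
      using lw_append by blast+
    have "\<forall>i\<ge>1. count_list xs (Suc i) + (if Suc i \<in> S then 1 else 0) \<le> count_list xs i + (if i \<in> S then 1 else 0)"
    proof (intro allI impI)
      fix i :: nat assume "1 \<le> i"
      then have "count_list (xs @ take (length ?ys) ?ys) (Suc i) \<le> count_list (xs @ take (length ?ys) ?ys) i"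
        using H by blast
      then show "count_list xs (Suc i) + (if Suc i \<in> S then 1 else 0) \<le> count_list xs i + (if i \<in> S then 1 else 0)"
        using ct[of "length ?ys"] st by (simp split: if_splits)
    qed
    then show ?R using lx by blast
  next
    assume R: ?R
    have "\<forall>m \<le> length ?ys. \<forall>i\<ge>1. count_list (xs @ take m ?ys) (Suc i) \<le> count_list (xs @ take m ?ys) i"
    proof (intro allI impI)
      fix m i :: nat assume "m \<le> length ?ys" and i: "1 \<le> i"
      have base: "count_list xs (Suc i) \<le> count_list xs i"
        using R i unfolding lattice_word_def by (metis le_refl take_all)
      have full: "count_list xs (Suc i) + (if Suc i \<in> S then 1 else 0) \<le> count_list xs i + (if i \<in> S then 1 else 0)"
        using R i by blast
      show "count_list (xs @ take m ?ys) (Suc i) \<le> count_list (xs @ take m ?ys) i"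
      proof (cases "Suc i \<in> set (take m ?ys)")
        case True
        then have "Suc i \<in> S" using st in_set_takeD by metis
        show ?thesis
        proof (cases "i \<in> S")
          case True
          then have "i \<in> set (take m ?ys)" using sorted_take_mem[OF st(1,2) \<open>Suc i \<in> set (take m ?ys)\<close>] st by simp
          then show ?thesis using base ct by simp
        next
          case False
          then show ?thesis using full \<open>Suc i \<in> S\<close> ct True by simp
        qed
      next
        case False
        then show ?thesis using base ct by simp
      qed
    qed
    then show ?L using R lw_append by blast
  qed
qed

lemma lattice_rw: "(\<forall>r. finite (B r)) \<Longrightarrow> lattice_word (rw L B) \<longleftrightarrow> lat L B"
proof (induction L)
  case 0
  then show ?case by (simp add: rw_0 lat_def lattice_word_def)
next
  case (Suc L)
  have "lattice_word (rw (Suc L) B) \<longleftrightarrow> lat L B \<and> (\<forall>c\<ge>1. Ncnt B (Suc c) (Suc L) \<le> Ncnt B c (Suc L))"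
    using Suc by (simp add: rw_Suc lw_sorted count_rw)
  also have "\<dots> \<longleftrightarrow> lat (Suc L) B" unfolding lat_def by (auto simp: le_Suc_eq simp del: Ncnt.simps)
  finally show ?case .
qed



lemma Ncnt_move:
  assumes "1 \<le> i" "U \<subseteq> B (Suc i) - B i"
  shows "Ncnt (B(i := B i \<union> U, Suc i := B (Suc i) - U)) c s =
     (if s = i then Ncnt B c s + (if c \<in> U then 1 else 0) else Ncnt B c s)"
proof (induction s)
  case 0
  then show ?case using assms by simp
next
  case (Suc s)
  show ?case
  proof (cases "Suc s = i")
    case True
    then show ?thesis using Suc assms by auto
  next
    case False
    then show ?thesis using Suc assms by auto
  qed
qed

lemma estar_eq: "estar i n L B = B(i := B i \<union> unmatched_cols i n L B, Suc i := B (Suc i) - unmatched_cols i n L B)"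
  by (simp add: estar_def Let_def)

lemma Ncnt_estar:
  assumes "1 \<le> i"
  shows "Ncnt (estar i n L B) c s =
     (if s = i then Ncnt B c s + (if c \<in> unmatched_cols i n L B then 1 else 0) else Ncnt B c s)"
  unfolding estar_eq by (rule Ncnt_move[OF assms unmatched_sub[OF assms]])

lemma estar_sub:
  assumes "1 \<le> i" "\<forall>r. B r \<subseteq> {1..n}"
  shows "\<forall>r. estar i n L B r \<subseteq> {1..n}"
  using unmatched_sub[OF assms(1), of n L B] assms(2) unfolding estar_eq by auto

lemma lat_back:
  assumes i: "1 \<le> i" "Suc i \<le> L" and sub: "\<forall>r. B r \<subseteq> {1..n}" and l: "lat L (estar i n L B)"
  shows "lat L B"
proof (rule ccontr)
  let ?U = "unmatched_cols i n L B"
  have Us: "?U \<subseteq> B (Suc i) - B i" by (rule unmatched_sub[OF i(1)])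
  assume "\<not> lat L B"
  then obtain s c where s: "s \<le> L" "1 \<le> c" "Ncnt B c s < Ncnt B (Suc c) s"
    unfolding lat_def by (auto simp: not_le)
  have l': "Ncnt (estar i n L B) (Suc c') s' \<le> Ncnt (estar i n L B) c' s'" if "s' \<le> L" "1 \<le> c'" for s' c'
    using l that unfolding lat_def by blast
  have si: "s = i"
  proof (rule ccontr)
    assume "s \<noteq> i"
    then show False using l'[OF s(1,2)] s(3) by (simp add: Ncnt_estar[OF i(1)])
  qed
  have A: "Ncnt B (Suc c) i + (if Suc c \<in> ?U then 1 else 0) \<le> Ncnt B c i + (if c \<in> ?U then 1 else 0)"
    using l'[OF s(1,2)] si by (simp add: Ncnt_estar[OF i(1)])
  have cU: "c \<in> ?U" and c1U: "Suc c \<notin> ?U" and eq: "Ncnt B (Suc c) i = Ncnt B c i + 1"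
    using A s(3) si by (auto split: if_splits)
  have cB: "c \<in> B (Suc i)" "c \<notin> B i" using cU Us by auto
  have B1: "Ncnt B (Suc c) (Suc i) \<le> Ncnt B c (Suc i)"
    using l'[OF i(2) s(2)] by (simp add: Ncnt_estar[OF i(1)] del: Ncnt.simps)
  have c1n: "Suc c \<notin> B (Suc i)" using B1 eq cB by (auto split: if_splits)
  obtain i' where i': "i = Suc i'" using i(1) by (cases i) auto
  have B0: "Ncnt B (Suc c) i' \<le> Ncnt B c i'"
  proof -
    have "Ncnt (estar i n L B) (Suc c) i' \<le> Ncnt (estar i n L B) c i'"
      using l'[of i' c] i i' s(2) by simp
    moreover have "i' \<noteq> i" using i' by simp
    ultimately show ?thesis by (simp add: Ncnt_estar[OF i(1)] del: Ncnt.simps)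
  qed
  have c1B: "Suc c \<in> B i" using B0 eq cB i' by (auto split: if_splits)
  have "Suc c \<le> n" using sub c1B by (meson atLeastAtMost_iff subsetD)
  have "c \<notin> ?U" using unmatched_notin[OF i(1) i(2) s(2) \<open>Suc c \<le> n\<close> cB c1B c1n] .
  then show False using cU by simp
qed

lemma foldr_back:
  assumes "\<forall>i\<in>set is. 1 \<le> i \<and> Suc i \<le> L" "\<forall>r. B r \<subseteq> {1..n}"
    "lat L (foldr (\<lambda>i. estar i n L) is B)"
  shows "lat L B"
  using assms
proof (induction "is" arbitrary: B)
  case Nil
  then show ?case by simp
next
  case (Cons a "is")
  have sub: "\<forall>r. foldr (\<lambda>i. estar i n L) is B r \<subseteq> {1..n}"
    using Cons.prems(1,2)
  proof (induction "is")
    case Nil then show ?case by simp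
  next
    case (Cons b bs) then show ?case using estar_sub by simp
  qed
  have "lat L (foldr (\<lambda>i. estar i n L) is B)"
    using lat_back[of a L _ n] Cons.prems sub by simp
  then show ?case using Cons by simp
qed

lemma foldr_sub:
  assumes "\<forall>i\<in>set is. 1 \<le> i" "\<forall>r. B r \<subseteq> {1..n}"
  shows "\<forall>r. foldr (\<lambda>i. estar i n L) is B r \<subseteq> {1..n}"
  using assms
proof (induction "is")
  case Nil then show ?case by simp
next
  case (Cons b bs) then show ?case using estar_sub by simp
qed

lemma fold_back:
  assumes "\<forall>k\<in>set ks. k < L" "\<forall>r. B r \<subseteq> {1..n}"
    "lat L (fold (\<lambda>k. estar_int n L 1 k) ks B)"
  shows "lat L B"
  using assms
proof (induction ks arbitrary: B)
  case Nil
  then show ?case by simp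
next
  case (Cons k ks)
  have ii: "\<forall>i\<in>set [1..<k+1]. 1 \<le> i \<and> Suc i \<le> L" using Cons.prems(1) by auto
  have sub: "\<forall>r. estar_int n L 1 k B r \<subseteq> {1..n}"
    unfolding estar_int_def using foldr_sub ii Cons.prems(2) by blast
  have "lat L (estar_int n L 1 k B)" using Cons.IH[OF _ sub] Cons.prems by simp
  then show ?case using foldr_back[OF ii Cons.prems(2)] unfolding estar_int_def by blast
qed

lemma rhoN_back:
  assumes "\<forall>r. B r \<subseteq> {1..n}" "lat L (rhoN n L B)"
  shows "lat L B"
  using fold_back[of "[1..<L]" L B n] assms unfolding rhoN_def by simp



definition Good :: "nat \<Rightarrow> (nat \<Rightarrow> nat set) \<Rightarrow> nat \<Rightarrow> (nat \<Rightarrow> nat set) \<Rightarrow> bool" where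
  "Good n M k B \<longleftrightarrow> (\<forall>r. 1 \<le> r \<and> r \<le> k \<longrightarrow> B r = {j. 1 \<le> j \<and> j \<le> n \<and> r \<le> Ncnt M j k})
     \<and> (\<forall>r>k. B r = M r) \<and> B 0 = {}"

definition Fset :: "nat \<Rightarrow> (nat \<Rightarrow> nat set) \<Rightarrow> nat \<Rightarrow> nat \<Rightarrow> nat \<Rightarrow> nat set" where
  "Fset n M k i r = {j. 1 \<le> j \<and> j \<le> n \<and> r \<le> Ncnt M j k} \<union> {j \<in> M (Suc k). r = max (Ncnt M j k + 1) (i + 1)}"

definition Inv :: "nat \<Rightarrow> (nat \<Rightarrow> nat set) \<Rightarrow> nat \<Rightarrow> nat \<Rightarrow> (nat \<Rightarrow> nat set) \<Rightarrow> bool" where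
  "Inv n M k i B \<longleftrightarrow> (\<forall>r. 1 \<le> r \<and> r \<le> Suc k \<longrightarrow> B r = Fset n M k i r)
     \<and> (\<forall>r>Suc k. B r = M r) \<and> B 0 = {}"

lemma Ncnt_le: "Ncnt B c s \<le> s"
  by (induction s) auto

lemma Inv_step:
  assumes i: "1 \<le> i" "i \<le> k" and kL: "Suc k \<le> L" and Msub: "\<forall>r. M r \<subseteq> {1..n}"
    and Hdec: "\<forall>j j'. 1 \<le> j \<longrightarrow> j \<le> j' \<longrightarrow> Ncnt M j' k \<le> Ncnt M j k"
    and inv: "Inv n M k i B"
  shows "Inv n M k (i - 1) (estar i n L B)"
proof -
  let ?U = "unmatched_cols i n L B"
  let ?S = "M (Suc k)"
  have Bi: "B i = Fset n M k i i" and Bi1: "B (Suc i) = Fset n M k i (Suc i)"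
    using inv i unfolding Inv_def by auto
  have Ssub: "j \<in> ?S \<Longrightarrow> 1 \<le> j \<and> j \<le> n" for j using Msub by (meson atLeastAtMost_iff subsetD)
  have U: "?U = {j \<in> ?S. Ncnt M j k < i}"
  proof
    show "?U \<subseteq> {j \<in> ?S. Ncnt M j k < i}"
    proof
      fix j assume "j \<in> ?U"
      then have "j \<in> B (Suc i) - B i" using unmatched_sub[OF i(1)] by blast
      then show "j \<in> {j \<in> ?S. Ncnt M j k < i}"
        unfolding Bi Bi1 Fset_def using Ssub by (auto simp: max_def split: if_splits)
    qed
  next
    show "{j \<in> ?S. Ncnt M j k < i} \<subseteq> ?U"
    proof
      fix j assume j: "j \<in> {j \<in> ?S. Ncnt M j k < i}"
      have j1: "1 \<le> j" "j \<le> n" using j Ssub by auto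
      have "j \<in> B (Suc i)" using j unfolding Bi1 Fset_def by (auto simp: max_def)
      moreover have "j \<notin> B i" using j unfolding Bi Fset_def by (auto simp: max_def)
      moreover have "\<forall>j'. j < j' \<longrightarrow> j' \<notin> B i"
      proof (intro allI impI)
        fix j' assume "j < j'"
        then have "Ncnt M j' k \<le> Ncnt M j k" using Hdec j1 by simp
        then show "j' \<notin> B i" using j unfolding Bi Fset_def by (auto simp: max_def)
      qed
      ultimately show "j \<in> ?U" using unmatched_in[OF i(1) _ j1] i kL by simp
    qed
  qed
  have rows: "(B(i := B i \<union> ?U, Suc i := B (Suc i) - ?U)) r = Fset n M k (i - 1) r"
    if "1 \<le> r" "r \<le> Suc k" for r
  proof -
    consider "r = i" | "r = Suc i" | "r \<noteq> i" "r \<noteq> Suc i" by blast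
    then show ?thesis
    proof cases
      case 1
      then show ?thesis unfolding Bi U Fset_def using i Ssub by (auto simp: max_def)
    next
      case 2
      then show ?thesis unfolding Bi1 U Fset_def using i Ssub by (auto simp: max_def)
    next
      case 3
      then have "B r = Fset n M k i r" using inv that unfolding Inv_def by auto
      then show ?thesis using 3 i unfolding Fset_def by (auto simp: max_def)
    qed
  qed
  show ?thesis
    unfolding estar_eq Inv_def using rows inv i unfolding Inv_def by auto
qed



lemma Good_Inv:
  assumes "Good n M k B"
  shows "Inv n M k k B"
proof -
  have le: "Ncnt M j k \<le> k" for j by (rule Ncnt_le)
  have "B r = Fset n M k k r" if "1 \<le> r" "r \<le> Suc k" for r
  proof (cases "r = Suc k")
    case True
    then have "B r = M (Suc k)" using assms unfolding Good_def by auto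
    then show ?thesis using True le unfolding Fset_def by (auto simp: max_def not_less_eq_eq[symmetric])
  next
    case False
    then have "r \<le> k" using that by simp
    then show ?thesis using assms that le unfolding Good_def Fset_def by (auto simp: max_def)
  qed
  then show ?thesis using assms unfolding Good_def Inv_def by auto
qed

lemma Inv_Good:
  assumes "Inv n M k 0 B" and Msub: "\<forall>r. M r \<subseteq> {1..n}"
  shows "Good n M (Suc k) B"
proof -
  have Ssub: "j \<in> M (Suc k) \<Longrightarrow> 1 \<le> j \<and> j \<le> n" for j using Msub by (meson atLeastAtMost_iff subsetD)
  have "B r = {j. 1 \<le> j \<and> j \<le> n \<and> r \<le> Ncnt M j (Suc k)}" if "1 \<le> r" "r \<le> Suc k" for r
  proof -
    have "B r = Fset n M k 0 r" using assms that unfolding Inv_def by auto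
    then show ?thesis unfolding Fset_def using Ssub by (auto simp: max_def)
  qed
  then show ?thesis using assms unfolding Good_def Inv_def by auto
qed

lemma inner:
  assumes k: "1 \<le> k" and kL: "Suc k \<le> L" and Msub: "\<forall>r. M r \<subseteq> {1..n}"
    and Hdec: "\<forall>j j'. 1 \<le> j \<longrightarrow> j \<le> j' \<longrightarrow> Ncnt M j' k \<le> Ncnt M j k"
    and g: "Good n M k B"
  shows "Good n M (Suc k) (estar_int n L 1 k B)"
proof -
  let ?f = "\<lambda>i. estar i n L"
  have "d \<le> k \<Longrightarrow> Inv n M k (k - d) (foldr ?f [Suc (k - d)..<Suc k] B)" for d
  proof (induction d)
    case 0
    then show ?case using Good_Inv[OF g] by (simp del: upt_Suc)
  next
    case (Suc d)
    have a: "Suc (k - Suc d) = k - d" using Suc.prems by simp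
    have "[k - d..<Suc k] = (k - d) # [Suc (k - d)..<Suc k]" by (rule upt_conv_Cons) simp
    then have eq: "[Suc (k - Suc d)..<Suc k] = (k - d) # [Suc (k - d)..<Suc k]" by (simp only: a)
    have "Inv n M k (k - d - 1) (estar (k - d) n L (foldr ?f [Suc (k - d)..<Suc k] B))"
    proof (rule Inv_step[of "k - d" k L M n])
      show "Inv n M k (k - d) (foldr ?f [Suc (k - d)..<Suc k] B)"
        using Suc.IH Suc.prems by (simp del: upt_Suc)
      show "1 \<le> k - d" using Suc.prems by simp
      show "k - d \<le> k" by simp
    qed (fact kL Msub Hdec)+
    moreover have "foldr ?f [Suc (k - Suc d)..<Suc k] B = estar (k - d) n L (foldr ?f [Suc (k - d)..<Suc k] B)"
      by (simp only: eq foldr_Cons o_apply)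
    moreover have "k - d - 1 = k - Suc d" by simp
    ultimately show ?case by simp
  qed
  from this[of k] have "Inv n M k 0 (foldr ?f [1..<Suc k] B)" by (simp del: upt_Suc)
  then show ?thesis using Inv_Good[OF _ Msub] unfolding estar_int_def by (simp del: upt_Suc)
qed

lemma Hdec_of_lat:
  assumes "lat L M" "k \<le> L"
  shows "\<forall>j j'. 1 \<le> j \<longrightarrow> j \<le> j' \<longrightarrow> Ncnt M j' k \<le> Ncnt M j k"
proof (intro allI impI)
  fix j j' :: nat assume "1 \<le> j" "j \<le> j'"
  from \<open>j \<le> j'\<close> show "Ncnt M j' k \<le> Ncnt M j k"
  proof (induction j' rule: dec_induct)
    case base then show ?case by simp
  next
    case (step m)
    have "Ncnt M (Suc m) k \<le> Ncnt M m k" using assms step.hyps \<open>1 \<le> j\<close> unfolding lat_def by simp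
    then show ?case using step.IH by simp
  qed
qed

lemma outer:
  assumes Msub: "\<forall>r. M r \<subseteq> {1..n}" and l: "lat L M"
  shows "1 \<le> k \<Longrightarrow> k + d = L \<Longrightarrow> Good n M k B \<Longrightarrow> Good n M L (fold (\<lambda>k. estar_int n L 1 k) [k..<L] B)"
proof (induction d arbitrary: k B)
  case 0
  then show ?case by simp
next
  case (Suc d)
  have eq: "[k..<L] = k # [Suc k..<L]" using Suc.prems by (simp add: upt_conv_Cons)
  have "Good n M (Suc k) (estar_int n L 1 k B)"
    using inner[of k L M n B] Suc.prems Msub Hdec_of_lat[OF l, of k] by simp
  then show ?case using Suc.IH[of "Suc k"] Suc.prems eq by simp
qed

lemma rhoN_Good:
  assumes Msub: "\<forall>r. M r \<subseteq> {1..n}" and M0: "M 0 = {}" and l: "lat L M"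
  shows "Good n M L (rhoN n L M)"
proof (cases L)
  case 0
  then show ?thesis using M0 unfolding Good_def rhoN_def by auto
next
  case (Suc L')
  have g1: "Good n M 1 M"
    using M0 Msub unfolding Good_def by (auto simp: subset_iff)
  show ?thesis using outer[OF Msub l, of 1 L' M] g1 Suc unfolding rhoN_def by simp
qed



lemma length_filter_mono':
  "(\<And>x. P x \<Longrightarrow> Q x) \<Longrightarrow> length (filter P xs) \<le> length (filter Q xs)"
  by (induction xs) auto

lemma conj_anti: "j' \<le> j \<Longrightarrow> conjugate \<nu> j \<le> conjugate \<nu> j'"
  unfolding conjugate_def by (rule length_filter_mono') simp

lemma conj_zero:
  assumes "is_partition \<nu>" "part \<nu> 1 < j"
  shows "conjugate \<nu> j = 0"
proof (cases \<nu>)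
  case Nil
  then show ?thesis by (simp add: conjugate_def)
next
  case (Cons a rest)
  then have "\<forall>x\<in>set rest. x \<le> a" using assms(1) by (simp add: is_partition_def)
  moreover have "a < j" using assms(2) Cons by (simp add: part_def)
  ultimately show ?thesis using Cons by (auto simp: conjugate_def filter_empty_conv)
qed

lemma Ncnt_card: "Ncnt B c s = card {r \<in> {1..s}. c \<in> B r}"
proof (induction s)
  case 0
  then show ?case by simp
next
  case (Suc s)
  have eq: "{r \<in> {1..Suc s}. c \<in> B r} = {r \<in> {1..s}. c \<in> B r} \<union> (if c \<in> B (Suc s) then {Suc s} else {})"
    by (auto simp: le_Suc_eq)
  show ?case unfolding eq using Suc by (auto simp: card_insert_if)
qed

lemma lat_LJ: "lat L (left_justified \<nu>)"
proof -
  have "Ncnt (left_justified \<nu>) (Suc c) s \<le> Ncnt (left_justified \<nu>) c s" if "1 \<le> c" for c s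
    using that by (induction s) (auto simp: left_justified_def)
  then show ?thesis unfolding lat_def by blast
qed

lemma down_closed:
  assumes "finite A" "\<forall>j\<in>A. 1 \<le> j" "\<forall>j j'. j \<in> A \<longrightarrow> 1 \<le> j' \<longrightarrow> j' \<le> j \<longrightarrow> j' \<in> A"
  shows "A = {1..card A}"
proof (cases "A = {}")
  case True
  then show ?thesis by simp
next
  case False
  let ?m = "Max A"
  have mA: "?m \<in> A" using Max_in[OF assms(1) False] .
  have "A = {1..?m}"
  proof
    show "A \<subseteq> {1..?m}" using assms(1,2) Max_ge by auto
    show "{1..?m} \<subseteq> A" using mA assms(3) by auto
  qed
  moreover have "card {1..?m} = ?m" by simp
  ultimately have "card A = ?m" by simp
  then show ?thesis using \<open>A = {1..?m}\<close> by simp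
qed

theorem lemma4p23:
  fixes lam mu :: "nat list" and n :: nat and M :: "nat \<Rightarrow> nat set"
  assumes "is_partition lam" and "is_partition mu" and "0 < n"
    and "is_mlq mu n M"
    and "\<forall>j\<ge>1. card {r. j \<in> M r} = conjugate lam j"
  shows "rhoN n (part mu 1) M = left_justified (conj_part lam)
         \<longleftrightarrow> lattice_word (rw (part mu 1) M)"
proof -
  define L where "L = part mu 1"
  have Msub: "\<forall>r. M r \<subseteq> {1..n}" and M0: "M 0 = {}" using assms(4) by (auto simp: is_mlq_def)
  have fin: "\<forall>r. finite (M r)" using Msub by (meson finite_atLeastAtMost finite_subset)
  have Mtop: "M r = {}" if "L < r" for r
  proof -
    have "card (M r) = 0" using assms(4) that conj_zero[OF assms(2), of r] by (simp add: is_mlq_def L_def)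
    then show ?thesis using fin by simp
  qed
  have colL: "Ncnt M j L = conjugate lam j" if "1 \<le> j" for j
  proof -
    have "{r. j \<in> M r} = {r \<in> {1..L}. j \<in> M r}"
      using M0 Mtop by (auto simp: not_less[symmetric] Suc_le_eq) (metis empty_iff neq0_conv)
    then show ?thesis using assms(5) that by (metis Ncnt_card)
  qed
  have lw: "lattice_word (rw L M) \<longleftrightarrow> lat L M" by (rule lattice_rw[OF fin])
  have LJeq: "B = left_justified (conj_part lam)" if g: "Good n M L B" for B
  proof
    fix r
    show "B r = left_justified (conj_part lam) r"
    proof (cases "r = 0")
      case True
      then show ?thesis using g by (simp add: Good_def left_justified_def)
    next
      case False
      then have r1: "1 \<le> r" by simp
      have Br: "B r = {j. 1 \<le> j \<and> j \<le> n \<and> r \<le> Ncnt M j L}"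
      proof (cases "r \<le> L")
        case True
        then show ?thesis using g r1 unfolding Good_def by blast
      next
        case False
        then have "B r = {}" using g Mtop unfolding Good_def by simp
        moreover have "\<not> r \<le> Ncnt M j L" for j using Ncnt_le[of M j L] False by simp
        ultimately show ?thesis by simp
      qed
      define A where "A = {j. 1 \<le> j \<and> r \<le> conjugate lam j}"
      have An: "j \<le> n" if "j \<in> A" for j
      proof (rule ccontr)
        assume "\<not> j \<le> n"
        have "j \<notin> M r'" for r'
        proof
          assume "j \<in> M r'"
          then have "j \<in> {1..n}" using Msub by blast
          then show False using \<open>\<not> j \<le> n\<close> by simp
        qed
        then have "{r. j \<in> M r} = {}" by blast
        moreover have "1 \<le> j" using that by (simp add: A_def)
        then have "card {r. j \<in> M r} = conjugate lam j" using assms(5) by blast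
        ultimately have "conjugate lam j = 0" by simp
        then show False using that r1 by (simp add: A_def)
      qed
      have Ap: "j \<le> part lam 1" if "j \<in> A" for j
      proof (rule ccontr)
        assume "\<not> j \<le> part lam 1"
        then have "conjugate lam j = 0" using conj_zero[OF assms(1)] by simp
        then show False using that r1 by (simp add: A_def)
      qed
      have "A \<subseteq> {1..part lam 1}" using Ap by (auto simp: A_def)
      then have finA: "finite A" using finite_subset by blast
      have Aeq: "A = {1..card A}"
      proof (rule down_closed[OF finA])
        show "\<forall>j\<in>A. 1 \<le> j" by (simp add: A_def)
        show "\<forall>j j'. j \<in> A \<longrightarrow> 1 \<le> j' \<longrightarrow> j' \<le> j \<longrightarrow> j' \<in> A"
        proof (intro allI impI)
          fix j j' assume "j \<in> A" "1 \<le> j'" "j' \<le> j"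
          then have "conjugate lam j \<le> conjugate lam j'" by (simp add: conj_anti)
          then show "j' \<in> A" using \<open>j \<in> A\<close> \<open>1 \<le> j'\<close> by (simp add: A_def)
        qed
      qed
      have "B r = {j. 1 \<le> j \<and> j \<le> n \<and> r \<le> conjugate lam j}"
        unfolding Br by (intro Collect_cong) (auto simp: colL)
      also have "\<dots> = A" using An by (auto simp: A_def)
      finally have "B r = A" .
      moreover have "conjugate (conj_part lam) r = card A"
      proof -
        have "conjugate (conj_part lam) r = length (filter (\<lambda>j. r \<le> conjugate lam j) [1..<part lam 1 + 1])"
          by (simp add: conjugate_def conj_part_def filter_map o_def)
        also have "\<dots> = card ({j. r \<le> conjugate lam j} \<inter> set [1..<part lam 1 + 1])"
          by (intro distinct_length_filter distinct_upt)
        also have "{j. r \<le> conjugate lam j} \<inter> set [1..<part lam 1 + 1] = A"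
        proof
          show "{j. r \<le> conjugate lam j} \<inter> set [1..<part lam 1 + 1] \<subseteq> A" by (auto simp: A_def)
          show "A \<subseteq> {j. r \<le> conjugate lam j} \<inter> set [1..<part lam 1 + 1]"
          proof
            fix x assume "x \<in> A"
            then have "x \<le> part lam 1" by (rule Ap)
            then show "x \<in> {j. r \<le> conjugate lam j} \<inter> set [1..<part lam 1 + 1]"
              using \<open>x \<in> A\<close> by (simp add: A_def, linarith)
          qed
        qed
        finally show ?thesis .
      qed
      ultimately show ?thesis using False Aeq by (simp add: left_justified_def)
    qed
  qed
  have "rhoN n L M = left_justified (conj_part lam) \<longleftrightarrow> lat L M"
  proof
    assume "rhoN n L M = left_justified (conj_part lam)"
    then have "lat L (rhoN n L M)" using lat_LJ by simp
    then show "lat L M" using rhoN_back[OF Msub] by blast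
  next
    assume "lat L M"
    then show "rhoN n L M = left_justified (conj_part lam)" using LJeq rhoN_Good[OF Msub M0] by blast
  qed
  then show ?thesis using lw L_def by simp
qed


end
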